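(* The function $\Xi(b)=\cos^2b\int_b^{-b}\frac{d\varphi}{\cos\varphi\sqrt{\cos^4\varphi-\cos^4b}}$ is continuous and increasing on $(-\pi/2,0)$, and $\lim_{b\to0-}\Xi(b)=\frac{\sqrt2}{2}\pi$. *)

theory Defs
  imports "HOL-Analysis.Analysis"
begin

text \<open>The integral is improper at the endpoints; it is taken as the (Lebesgue) interval
  integral, which agrees with the improper Riemann integral since the integrand is
  nonnegative on the open interval.\<close>
definition Xi :: "real \<Rightarrow> real" where
  "Xi b = (cos b)^2 * (LBINT \<phi>=b..-b. 1 / (cos \<phi> * sqrt ((cos \<phi>)^4 - (cos b)^4)))"

end

theory Submission
  imports Defs
begin

lemma aux_field:
  fixes q w C S z :: real
  assumes "q > 0" "w > 0" "C > 0" "S < 0" "z > 0"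
  shows "1 / ((1 / (q / C)) * (C^2 * (-S) * z * w / q^2)) * (- S / C * z / (q^2 / C^2)) = q / (C^2 * w)"
  using assms by (simp add: field_simps power2_eq_square)

lemma key_alg:
  fixes S C y z :: real
  assumes S: "S < 0" and C: "C > 0" and SC: "S^2 + C^2 = 1" and z: "z > 0" and yz: "y^2 + z^2 = 1"
  defines "T \<equiv> - S / C"
  shows "1 / ((1 / sqrt (1 + (T*y)^2)) * sqrt ((1 / sqrt (1 + (T*y)^2))^4 - C^4)) *
           (T * z / (1 + (T*y)^2))
         = sqrt ((1 - (S*z)^2) / (2 - (S*z)^2)) / C^2"
proof -
  define p where "p = 1 - (S*z)^2"
  have z1: "z^2 \<le> 1" using yz zero_le_power2[of y] by linarith
  have C2: "C^2 > 0" using C by simp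
  have S1: "S^2 < 1" using SC C2 by linarith
  have "S^2 * z^2 \<le> S^2 * 1" using z1 by (intro mult_left_mono) auto
  then have pp: "p > 0" unfolding p_def using S1 by (simp add: power_mult_distrib)
  have Ty: "(T*y)^2 = S^2*y^2/C^2" by (simp add: T_def power_mult_distrib power_divide)
  have pe: "p = C^2 + S^2*y^2"
  proof -
    have "y^2 = 1 - z^2" using yz by simp
    then have "S^2*y^2 = S^2 - S^2*z^2" by (simp add: right_diff_distrib)
    then show ?thesis unfolding p_def using SC by (simp add: power_mult_distrib)
  qed
  have D: "1 + (T*y)^2 = p / C^2"
    unfolding Ty pe using C2 by (simp add: field_simps)
  have sD: "sqrt (1 + (T*y)^2) = sqrt p / C"
    using D C by (simp add: real_sqrt_divide)
  have q4: "(1 / sqrt (1 + (T*y)^2))^4 = C^4 / p^2"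
  proof -
    have "(1 / sqrt (1 + (T*y)^2))^4 = ((1 / sqrt (1 + (T*y)^2))^2)^2" by simp
    also have "(1 / sqrt (1 + (T*y)^2))^2 = C^2 / p" unfolding sD using pp C
      by (simp add: power_divide)
    finally show ?thesis by (simp add: power_divide)
  qed
  have c4: "(1 / sqrt (1 + (T*y)^2))^4 - C^4 = (C^2 * (-S) * z * sqrt (1+p) / p)^2"
  proof -
    have a: "(C^2 * (-S) * z * sqrt (1+p) / p)^2 = C^4 * S^2 * z^2 * (1+p) / p^2"
      using pp by (simp add: power_mult_distrib power_divide)
    have b: "C^4 / p^2 - C^4 = C^4 * (1 - p^2) / p^2"
      using pp by (simp add: field_simps)
    have c: "1 - p^2 = S^2 * z^2 * (1+p)"
      unfolding p_def by (simp add: power_mult_distrib power2_eq_square algebra_simps)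
    show ?thesis unfolding q4 a b c by simp
  qed
  have sc4: "sqrt ((1 / sqrt (1 + (T*y)^2))^4 - C^4) = C^2 * (-S) * z * sqrt (1+p) / p"
  proof -
    have nn: "0 \<le> C^2 * (-S) * z * sqrt (1+p) / p" using S C z pp
      by (intro divide_nonneg_pos mult_nonneg_nonneg) auto
    show ?thesis by (simp only: c4 real_sqrt_abs abs_of_nonneg[OF nn])
  qed
  have "1 / ((1 / sqrt (1 + (T*y)^2)) * sqrt ((1 / sqrt (1 + (T*y)^2))^4 - C^4)) *
           (T * z / (1 + (T*y)^2)) = sqrt p / (C^2 * sqrt (1 + p))"
  proof -
    have sp: "sqrt p * sqrt p = p" using pp by simp
    have s1: "sqrt (1+p) > 0" using pp by simp
    have sp0: "sqrt p > 0" using pp by simp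
    have pq: "p = (sqrt p)^2" using pp by simp
    have "1 / ((1 / sqrt (1 + (T*y)^2)) * sqrt ((1 / sqrt (1 + (T*y)^2))^4 - C^4)) *
           (T * z / (1 + (T*y)^2)) = 1/((1/(sqrt p / C)) * (C^2*(-S)*z * sqrt(1+p)/p)) * (T*z/(p/C^2))"
      by (simp only: sc4, simp only: sD, simp only: D)
    also have "... = 1/((1/(sqrt p / C)) * (C^2*(-S)*z * sqrt(1+p)/(sqrt p)^2)) * ((-S/C)*z/((sqrt p)^2/C^2))"
      using pq T_def by simp
    also have "... = sqrt p / (C^2 * sqrt (1 + p))"
      by (rule aux_field[OF sp0 s1 C S z])
    finally show ?thesis .
  qed
  also have "... = sqrt (p / (1+p)) / C^2"
    by (simp add: real_sqrt_divide)
  finally show ?thesis unfolding p_def by (simp add: algebra_simps)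
qed
definition K :: "real \<Rightarrow> real \<Rightarrow> real" where
  "K b x = sqrt ((1 - (sin b * cos x)^2) / (2 - (sin b * cos x)^2))"

lemma sq_le1: "(sin (b::real) * cos x)^2 \<le> 1"
proof -
  have "\<bar>sin b * cos x\<bar> \<le> 1" by (simp add: abs_mult mult_le_one)
  then show ?thesis by (metis power2_abs power_le_one abs_ge_zero)
qed

lemma K_cont: "continuous_on UNIV (\<lambda>z::real\<times>real. K (fst z) (snd z))"
proof -
  have "\<And>z::real\<times>real. 2 - (sin (fst z) * cos (snd z))^2 \<noteq> 0" using sq_le1 by (smt (verit))
  then show ?thesis unfolding K_def by (intro continuous_intros) auto
qed

lemma K_cont1: "continuous_on A (K b)"
proof -
  have "continuous_on A ((\<lambda>z::real\<times>real. K (fst z) (snd z)) \<circ> (\<lambda>x. (b, x)))"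
    by (intro continuous_on_compose continuous_intros continuous_on_subset[OF K_cont]) auto
  then show ?thesis by (simp add: o_def)
qed

lemma Xi_eq:
  assumes b1: "-pi/2 < b" and b2: "b < 0"
  shows "Xi b = integral {-pi/2..pi/2} (K b)"
proof -
  define C where "C = cos b"
  define S where "S = sin b"
  define T where "T = - S / C"
  define f where "f = (\<lambda>\<phi>::real. 1 / (cos \<phi> * sqrt ((cos \<phi>)^4 - (cos b)^4)))"
  define g where "g = (\<lambda>x::real. arctan (T * sin x))"
  define g' where "g' = (\<lambda>x::real. T * cos x / (1 + (T * sin x)^2))"
  have C: "C > 0" unfolding C_def using b1 b2 by (intro cos_gt_zero_pi) auto
  have S: "S < 0" unfolding S_def using sin_gt_zero[of "-b"] b1 b2 by auto
  have SC: "S^2 + C^2 = 1" unfolding S_def C_def by simp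
  have T: "T > 0" unfolding T_def using S C by (simp add: divide_neg_pos)
  have Tt: "T = tan (-b)" unfolding T_def S_def C_def by (simp add: tan_def)
  have aT: "arctan T = -b" unfolding Tt using b1 b2 by (intro arctan_tan) auto
  have ga: "g (-pi/2) = b" unfolding g_def using aT by (simp add: arctan_minus)
  have gb: "g (pi/2) = -b" unfolding g_def using aT by simp
  have gcont: "isCont g x" for x unfolding g_def by (intro continuous_intros)
  have gin: "b < g x \<and> g x < -b" if x: "-pi/2 < x" "x < pi/2" for x
  proof -
    have cx: "cos x > 0" using x by (intro cos_gt_zero_pi) auto
    have "(sin x)^2 < 1" using cx sin_cos_squared_add[of x] by (smt (verit) zero_less_power2)
    then have "\<bar>sin x\<bar> < 1" by (simp add: abs_square_less_1)
    then have "-T < T * sin x" "T * sin x < T" using T mult_strict_left_mono[of "-1" "sin x" T] mult_strict_left_mono[of "sin x" 1 T] by (auto simp: abs_less_iff)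
    then have "arctan (-T) < g x" "g x < arctan T" unfolding g_def by (auto simp: arctan_less_iff)
    then show ?thesis using aT by (simp add: arctan_minus)
  qed
  have cosg: "cos (g x) > C" if x: "-pi/2 < x" "x < pi/2" for x
  proof -
    have "\<bar>g x\<bar> < -b" using gin[OF x] by auto
    then have "cos (-b) < cos \<bar>g x\<bar>" using b1 by (intro cos_monotone_0_pi) auto
    then show ?thesis unfolding C_def by simp
  qed
  have gpos: "(cos (g x))^4 - (cos b)^4 > 0" if x: "-pi/2 < x" "x < pi/2" for x
  proof -
    have "C^4 < (cos (g x))^4" using cosg[OF x] C by (intro power_strict_mono) auto
    then show ?thesis unfolding C_def by simp
  qed
  have fcont: "isCont f (g x)" if x: "-pi/2 < x" "x < pi/2" for x
  proof -
    show ?thesis using gpos[OF x] unfolding f_def using cosg[OF x] C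
      by (intro continuous_intros) auto
  qed
  have fnn: "0 \<le> f (g x)" if x: "-pi/2 < x" "x < pi/2" for x
    unfolding f_def using cosg[OF x] C gpos[OF x] by simp
  have g'nn: "0 \<le> g' x" if x: "-pi/2 \<le> x" "x \<le> pi/2" for x
    unfolding g'_def using T cos_ge_zero[of x] x by simp
  have g'cont: "isCont g' x" for x
  proof -
    have "1 + (T * sin x)^2 \<noteq> 0" by (smt (verit) zero_le_power2)
    then show ?thesis unfolding g'_def by (intro continuous_intros) auto
  qed
  have gderiv: "DERIV g x :> g' x" for x
    unfolding g_def g'_def by (auto intro!: derivative_eq_intros simp: field_simps)
  have keyx: "f (g x) * g' x = K b x / C^2" if x: "-pi/2 < x" "x < pi/2" for x
  proof -
    have cx: "cos x > 0" using x by (intro cos_gt_zero_pi) auto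
    have "f (g x) * g' x = 1 / ((1 / sqrt (1 + (T * sin x)^2)) * sqrt ((1 / sqrt (1 + (T * sin x)^2))^4 - C^4)) *
           (T * cos x / (1 + (T * sin x)^2))"
      unfolding f_def g_def g'_def C_def by (simp add: cos_arctan)
    also have "... = sqrt ((1 - (S * cos x)^2) / (2 - (S * cos x)^2)) / C^2"
      unfolding T_def by (rule key_alg[OF S C SC cx]) simp
    finally show ?thesis unfolding K_def S_def .
  qed
  have intK: "set_integrable lborel {-pi/2..pi/2} (\<lambda>x. K b x / C^2)"
    using C by (intro borel_integrable_atLeastAtMost' continuous_intros K_cont1) auto
  have intfg: "set_integrable lborel (einterval (-pi/2) (pi/2)) (\<lambda>x. f (g x) * g' x)"
  proof -
    have "set_integrable lborel {-pi/2<..<pi/2} (\<lambda>x. K b x / C^2)"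
      by (rule set_integrable_subset[OF intK]) auto
    then show ?thesis
      by (subst set_integrable_cong[where f' = "\<lambda>x. K b x / C^2"]) (auto simp: keyx)
  qed
  have A: "((ereal \<circ> g \<circ> real_of_ereal) \<longlongrightarrow> ereal b) (at_right (ereal (-pi/2)))"
  proof -
    have "(g \<longlongrightarrow> g (-pi/2)) (at (-pi/2))" using gcont by (simp add: isCont_def)
    then have "(g \<longlongrightarrow> b) (at_right (-pi/2))" using ga filterlim_at_split by force
    then show ?thesis by (simp add: ereal_tendsto_simps)
  qed
  have B: "((ereal \<circ> g \<circ> real_of_ereal) \<longlongrightarrow> ereal (-b)) (at_left (ereal (pi/2)))"
  proof -
    have "(g \<longlongrightarrow> g (pi/2)) (at (pi/2))" using gcont by (simp add: isCont_def)
    then have "(g \<longlongrightarrow> -b) (at_left (pi/2))" using gb filterlim_at_split by force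
    then show ?thesis by (simp add: ereal_tendsto_simps)
  qed
  have sub: "(LBINT x=ereal b..ereal (-b). f x) = (LBINT x=ereal (-pi/2)..ereal (pi/2). f (g x) * g' x)"
    by (rule interval_integral_substitution_nonneg(2)[of "ereal (-pi/2)" "ereal (pi/2)" g g' f "ereal b" "ereal (-b)"])
       (use gderiv fcont g'cont fnn g'nn A B intfg in auto)
  also have "... = integral {-pi/2<..<pi/2} (\<lambda>x. f (g x) * g' x)"
    using intfg by (subst interval_integral_eq_integral') auto
  also have "... = integral {-pi/2<..<pi/2} (\<lambda>x. K b x / C^2)"
    by (rule integral_cong) (auto simp: keyx)
  also have "... = integral {-pi/2..pi/2} (K b) / C^2"
    by (simp add: integral_open_interval_real[symmetric])
  finally have "(LBINT x=ereal b..ereal (-b). f x) = integral {-pi/2..pi/2} (K b) / C^2" .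
  then show ?thesis unfolding Xi_def f_def using C C_def by simp
qed

definition F :: "real \<Rightarrow> real" where "F b = integral {-pi/2..pi/2} (K b)"

lemma F_cont: "continuous_on UNIV F"
proof -
  have "continuous_on UNIV (\<lambda>b. integral (cbox (-pi/2) (pi/2)) (K b))"
    by (rule integral_continuous_on_param)
       (use continuous_on_subset[OF K_cont] in \<open>auto simp: case_prod_beta\<close>)
  then show ?thesis unfolding F_def by simp
qed

lemma Kmono_aux:
  fixes u v :: real
  assumes "0 \<le> v" "v < u" "u \<le> 1"
  shows "sqrt ((1 - u) / (2 - u)) < sqrt ((1 - v) / (2 - v))"
proof -
  have "(1 - u) / (2 - u) < (1 - v) / (2 - v)"
    using assms by (simp add: divide_simps algebra_simps)
  then show ?thesis by simp
qed

lemma F_mono: "strict_mono_on {-pi/2<..<0} F"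
proof (rule strict_mono_onI)
  fix r s :: real assume r: "r \<in> {-pi/2<..<0}" and s: "s \<in> {-pi/2<..<0}" and rs: "r < s"
  have sr: "sin r < sin s" using r s rs by (subst sin_mono_less_eq) auto
  have s0: "sin s < 0" using sin_gt_zero[of "-s"] s by auto
  show "F r < F s" unfolding F_def
  proof (rule integral_less_real)
    show "continuous_on {- pi / 2..pi / 2} (K r)" "continuous_on {- pi / 2..pi / 2} (K s)"
      by (rule K_cont1)+
    show "{- pi / 2<..<pi / 2} \<noteq> {}" using pi_gt_zero by (auto; linarith)
    fix x assume x: "x \<in> {- pi / 2<..<pi / 2}"
    have cx: "cos x > 0" using x by (intro cos_gt_zero_pi) auto
    have "sin r * cos x < sin s * cos x" "sin s * cos x < 0"
      using sr s0 cx by (auto simp: mult_neg_pos)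
    then have lt: "(sin s * cos x)^2 < (sin r * cos x)^2"
      by (smt (verit) power2_minus power_strict_mono zero_le_numeral zero_less_numeral)
    show "K r x < K s x" unfolding K_def
      by (rule Kmono_aux) (use lt sq_le1 in auto)
  qed
qed

lemma F0: "F 0 = sqrt 2 / 2 * pi"
proof -
  have "F 0 = pi * sqrt (1/2)" unfolding F_def K_def by simp
  also have "sqrt (1/2::real) = sqrt 2 / 2"
    by (simp add: real_sqrt_divide field_simps)
  finally show ?thesis by simp
qed

theorem proposition5:
  shows "continuous_on {-pi/2<..<0} Xi \<and> strict_mono_on {-pi/2<..<0} Xi \<and>
         (Xi \<longlongrightarrow> sqrt 2 / 2 * pi) (at_left 0)"
proof (intro conjI)
  have eq: "\<And>b. b \<in> {-pi/2<..<0} \<Longrightarrow> Xi b = F b" using Xi_eq unfolding F_def by auto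
  show "continuous_on {-pi/2<..<0} Xi"
    using continuous_on_subset[OF F_cont] by (subst continuous_on_cong[OF refl eq]) auto
  show "strict_mono_on {-pi/2<..<0} Xi"
    using F_mono eq unfolding strict_mono_on_def by auto
  have "(F \<longlongrightarrow> F 0) (at 0)"
    using F_cont by (simp add: continuous_on_def)
  then have "(F \<longlongrightarrow> F 0) (at_left 0)" using filterlim_at_split by blast
  moreover have "eventually (\<lambda>b. F b = Xi b) (at_left (0::real))"
  proof -
    have "eventually (\<lambda>b. b \<in> {-pi/2<..<0}) (at_left (0::real))"
      using pi_gt_zero by (intro eventually_at_leftI[of "-pi/2"]) auto
    then show ?thesis by eventually_elim (simp add: eq)
  qed
  ultimately show "(Xi \<longlongrightarrow> sqrt 2 / 2 * pi) (at_left 0)"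
    unfolding F0 by (rule Lim_transform_eventually)
qed

end
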